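(* Consider $n$ flows $f_1,\dots,f_n$ sharing a server that performs weighted round robin (WRR) with positive integer weights $w_1,\dots,w_n$. Fix a flow of interest $f_i$. Then for every interval $(s,t]$ that is a backlogged period of $f_i$ and every $j\neq i$, \[ \frac{D_i(s,t)}{w_i l_i^{\min}} \;\geq\; \frac{\big[D_j(s,t)-w_j l_j^{\max}\big]^+}{w_j l_j^{\max}}. \] In other words, WRR is a bandwidth-sharing policy (for flow $f_i$) with weights $\phi_i'=q_i:=w_i l_i^{\min}$, $\phi_j'=q_j:=w_j l_j^{\max}$ for $j\neq i$, and penalty terms $H_{ij}'=w_j l_j^{\max}\,\mathbb{1}_{\{i\neq j\}}$.
   Context: Each flow $f_k$ sends packets whose sizes lie in $[l_k^{\min},l_k^{\max}]$ with $0<l_k^{\min}\le l_k^{\max}$. Each flow has its own FIFO queue at the server. WRR operates in rounds forever; in each round the server visits flows $k=1,\dots,n$ in order, and at the visit of flow $k$ it transmits (non-preemptively, one after another) packets from the head of queue $k$ until either queue $k$ is empty or $w_k$ packets have been sent in that visit; then it moves to the next flow. $D_k(t)$ denotes the cumulative amount of data (e.g. bits) of flow $k$ that has left the server in $[0,t)$, $A_k(t)$ the cumulative arrivals, with $D_k\le A_k$, both nondecreasing; $D_k(s,t):=D_k(t)-D_k(s)$. An interval $(s,t]$ is a backlogged period of $f_i$ if $D_i(\tau)<A_i(\tau)$ for all $\tau\in(s,t]$. $[x]^+:=\max\{x,0\}$. A server has a bandwidth-sharing policy if there exist weights $\phi_k>0$ and numbers $H_{ij}\ge 0$ such that for every backlogged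 period $(s,t]$ of flow $f_i$ and all $j\ne i$: $D_i(s,t)/\phi_i\ge [D_j(s,t)-H_{ij}]^+/\phi_j$. *)

theory Defs
  imports Complex_Main
begin

text \<open>
Model of a WRR server with n flows, indexed 0,...,n-1.
The server performs an infinite sequence of visits v = 0,1,2,...; visit v serves
flow (v mod n) (round v div n).  Visit v occupies the time interval [b v, e v]
and transmits c v packets of flow (v mod n); packet m < c v of visit v has
length len v m and is transmitted during [ps v m, pe v m].  The amount of data of
that packet that has left the server in [0,tau) is out v m tau (nondecreasing,
0 before the transmission starts, len v m once it is finished).
\<close>

definition wrr_D ::
  "nat \<Rightarrow> (nat \<Rightarrow> real) \<Rightarrow> (nat \<Rightarrow> nat) \<Rightarrow> (nat \<Rightarrow> nat \<Rightarrow> real \<Rightarrow> real)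
   \<Rightarrow> nat \<Rightarrow> real \<Rightarrow> real" where
  "wrr_D n b c out k \<tau> =
     (\<Sum>v\<in>{v. b v < \<tau> \<and> v mod n = k}. \<Sum>m<c v. out v m \<tau>)"

definition wrr_server ::
  "nat \<Rightarrow> (nat \<Rightarrow> nat) \<Rightarrow> (nat \<Rightarrow> real) \<Rightarrow> (nat \<Rightarrow> real) \<Rightarrow> (nat \<Rightarrow> real \<Rightarrow> real)
   \<Rightarrow> (nat \<Rightarrow> real) \<Rightarrow> (nat \<Rightarrow> real) \<Rightarrow> (nat \<Rightarrow> nat)
   \<Rightarrow> (nat \<Rightarrow> nat \<Rightarrow> real) \<Rightarrow> (nat \<Rightarrow> nat \<Rightarrow> real) \<Rightarrow> (nat \<Rightarrow> nat \<Rightarrow> real)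
   \<Rightarrow> (nat \<Rightarrow> nat \<Rightarrow> real \<Rightarrow> real) \<Rightarrow> bool" where
  "wrr_server n w lmin lmax A b e c len ps pe out \<longleftrightarrow>
     (\<forall>v. b v \<le> e v \<and> e v \<le> b (Suc v)) \<and>
     (\<forall>\<tau>. finite {v. b v < \<tau>}) \<and>
     (\<forall>v. c v \<le> w (v mod n)) \<and>
     (\<forall>v m. m < c v \<longrightarrow>
        b v \<le> ps v m \<and> ps v m \<le> pe v m \<and> pe v m \<le> e v \<and>
        lmin (v mod n) \<le> len v m \<and> len v m \<le> lmax (v mod n)) \<and>
     (\<forall>v m m'. m < m' \<and> m' < c v \<longrightarrow> pe v m \<le> ps v m') \<and>
     (\<forall>v m. m < c v \<longrightarrow> mono (out v m) \<and>
        (\<forall>\<tau>. \<tau> \<le> ps v m \<longrightarrow> out v m \<tau> = 0) \<and>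
        (\<forall>\<tau>. pe v m \<le> \<tau> \<longrightarrow> out v m \<tau> = len v m)) \<and>
     (\<forall>k<n. mono (A k) \<and> (\<forall>\<tau>. wrr_D n b c out k \<tau> \<le> A k \<tau>)) \<and>
     (\<forall>v. c v < w (v mod n) \<longrightarrow>
        A (v mod n) (e v) \<le> wrr_D n b c out (v mod n) (e v))"

definition backlogged_period ::
  "(real \<Rightarrow> real) \<Rightarrow> (real \<Rightarrow> real) \<Rightarrow> real \<Rightarrow> real \<Rightarrow> bool" where
  "backlogged_period D A s t \<longleftrightarrow> s < t \<and> (\<forall>\<tau>. s < \<tau> \<and> \<tau> \<le> t \<longrightarrow> D \<tau> < A \<tau>)"

end

theory Submission
  imports Defs
begin

lemma aux_div: "(q::real) \<noteq> 0 \<Longrightarrow> (x - q) / q = x / q - 1"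
  by (simp add: diff_divide_distrib)

theorem mainTheorem1:
  fixes n :: nat and w :: "nat \<Rightarrow> nat" and lmin lmax :: "nat \<Rightarrow> real"
    and A :: "nat \<Rightarrow> real \<Rightarrow> real"
    and b e :: "nat \<Rightarrow> real" and c :: "nat \<Rightarrow> nat"
    and len ps pe :: "nat \<Rightarrow> nat \<Rightarrow> real" and out :: "nat \<Rightarrow> nat \<Rightarrow> real \<Rightarrow> real"
    and i j :: nat and s t :: real
  assumes "1 \<le> n"
    and "\<forall>k<n. 1 \<le> w k"
    and "\<forall>k<n. 0 < lmin k \<and> lmin k \<le> lmax k"
    and "wrr_server n w lmin lmax A b e c len ps pe out"
    and "i < n" and "j < n" and "j \<noteq> i"
    and "backlogged_period (wrr_D n b c out i) (A i) s t"
  shows "(wrr_D n b c out i t - wrr_D n b c out i s) / (real (w i) * lmin i)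
         \<ge> max (wrr_D n b c out j t - wrr_D n b c out j s - real (w j) * lmax j) 0
             / (real (w j) * lmax j)"
proof -
  let ?D = "wrr_D n b c out"
  define S where "S = (\<lambda>v \<tau>. \<Sum>m<c v. out v m \<tau>)"
  have W: "wrr_server n w lmin lmax A b e c len ps pe out" by fact
  have be: "\<And>v. b v \<le> e v" and eb: "\<And>v. e v \<le> b (Suc v)"
    using W unfolding wrr_server_def by auto
  have fin: "\<And>\<tau>. finite {v. b v < \<tau>}" using W unfolding wrr_server_def by auto
  have cw: "\<And>v. c v \<le> w (v mod n)" using W unfolding wrr_server_def by auto
  have pk: "\<And>v m. m < c v \<Longrightarrow> b v \<le> ps v m \<and> ps v m \<le> pe v m \<and> pe v m \<le> e v \<and>
        lmin (v mod n) \<le> len v m \<and> len v m \<le> lmax (v mod n)"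
    using W unfolding wrr_server_def by blast
  have outp: "\<And>v m. m < c v \<Longrightarrow> mono (out v m) \<and> (\<forall>\<tau>. \<tau> \<le> ps v m \<longrightarrow> out v m \<tau> = 0)
      \<and> (\<forall>\<tau>. pe v m \<le> \<tau> \<longrightarrow> out v m \<tau> = len v m)"
    using W unfolding wrr_server_def by blast
  have full: "\<And>v. c v < w (v mod n) \<Longrightarrow> A (v mod n) (e v) \<le> ?D (v mod n) (e v)"
    using W unfolding wrr_server_def by blast
  have st: "s < t" and bl: "\<And>\<tau>. s < \<tau> \<Longrightarrow> \<tau> \<le> t \<Longrightarrow> ?D i \<tau> < A i \<tau>"
    using assms(8) unfolding backlogged_period_def by auto
  have bmono: "\<And>u v. u \<le> v \<Longrightarrow> b u \<le> b v"
  proof -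
    fix u v :: nat assume "u \<le> v"
    have "\<And>k. b k \<le> b (Suc k)" using be eb order_trans by blast
    thus "b u \<le> b v" using \<open>u \<le> v\<close> by (rule lift_Suc_mono_le)
  qed
  have eb2: "\<And>u v. u < v \<Longrightarrow> e u \<le> b v"
    using eb bmono by (meson Suc_leI order_trans)
  have out0: "\<And>v m \<tau>. m < c v \<Longrightarrow> 0 \<le> out v m \<tau>"
  proof -
    fix v m \<tau> assume m: "m < c v"
    show "0 \<le> out v m \<tau>"
    proof (cases "\<tau> \<le> ps v m")
      case True thus ?thesis using outp[OF m] by simp
    next
      case False
      hence "out v m (ps v m) \<le> out v m \<tau>" using outp[OF m] by (meson monoD nle_le)
      thus ?thesis using outp[OF m] by simp
    qed
  qed
  have outl: "\<And>v m \<tau>. m < c v \<Longrightarrow> out v m \<tau> \<le> len v m"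
  proof -
    fix v m \<tau> assume m: "m < c v"
    show "out v m \<tau> \<le> len v m"
    proof (cases "pe v m \<le> \<tau>")
      case True thus ?thesis using outp[OF m] by simp
    next
      case False
      hence "out v m \<tau> \<le> out v m (pe v m)" using outp[OF m] by (meson monoD nle_le)
      thus ?thesis using outp[OF m] by simp
    qed
  qed
  define F where "F = {v. b v < t}"
  have finF: "finite F" unfolding F_def by (rule fin)
  have S0: "\<And>v \<tau>. \<tau> \<le> b v \<Longrightarrow> S v \<tau> = 0"
    unfolding S_def using pk outp by (smt (verit, best) sum.neutral lessThan_iff)
  have Sfull: "\<And>v \<tau>. e v \<le> \<tau> \<Longrightarrow> S v \<tau> = (\<Sum>m<c v. len v m)"
    unfolding S_def using pk outp by (smt (verit, best) sum.cong lessThan_iff)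
  have Smono: "\<And>v. S v s \<le> S v t"
    unfolding S_def using outp st by (meson lessThan_iff monoD less_imp_le sum_mono)
  have Snn: "\<And>v \<tau>. 0 \<le> S v \<tau>" unfolding S_def using out0 by (meson lessThan_iff sum_nonneg)
  have Dsum: "\<And>k \<tau>. \<tau> \<le> t \<Longrightarrow> ?D k \<tau> = (\<Sum>v\<in>{v\<in>F. v mod n = k}. S v \<tau>)"
  proof -
    fix k \<tau> assume "\<tau> \<le> t"
    have "?D k \<tau> = (\<Sum>v\<in>{v. b v < \<tau> \<and> v mod n = k}. S v \<tau>)"
      by (simp add: wrr_D_def S_def)
    also have "\<dots> = (\<Sum>v\<in>{v\<in>F. v mod n = k}. S v \<tau>)"
      by (rule sum.mono_neutral_left) (use finF \<open>\<tau> \<le> t\<close> S0 in \<open>auto simp: F_def not_less[symmetric]\<close>)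
    finally show "?D k \<tau> = (\<Sum>v\<in>{v\<in>F. v mod n = k}. S v \<tau>)" .
  qed
  define g where "g v = S v t - S v s" for v
  have Ddiff: "\<And>k. ?D k t - ?D k s = (\<Sum>v\<in>{v\<in>F. v mod n = k}. g v)"
    using Dsum[OF order_refl] Dsum[OF less_imp_le[OF st]] by (simp add: g_def sum_subtractf)
  have gnn: "\<And>v. 0 \<le> g v" using Smono by (simp add: g_def)
  have qj: "0 < real (w j) * lmax j" and qi: "0 < real (w i) * lmin i"
    using assms(2,3,5,6) by (smt (verit) mult_pos_pos of_nat_0_less_iff less_le_trans zero_less_one)+
  define J where "J = {v\<in>F. v mod n = j \<and> s < e v}"
  define I where "I = {u\<in>F. u mod n = i \<and> s < b u \<and> e u \<le> t}"
  have finJ: "finite J" and finI: "finite I" using finF unfolding J_def I_def by auto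
  have DJ: "?D j t - ?D j s = (\<Sum>v\<in>J. g v)"
    unfolding Ddiff J_def
  proof (rule sum.mono_neutral_right)
    show "finite {v \<in> F. v mod n = j}" using finF by simp
    show "{v \<in> F. v mod n = j \<and> s < e v} \<subseteq> {v \<in> F. v mod n = j}" by auto
    show "\<forall>v\<in>{v \<in> F. v mod n = j} - {v \<in> F. v mod n = j \<and> s < e v}. g v = 0"
    proof
      fix v assume "v \<in> {v \<in> F. v mod n = j} - {v \<in> F. v mod n = j \<and> s < e v}"
      hence "e v \<le> s" by auto
      hence "S v s = (\<Sum>m<c v. len v m)" "S v t = (\<Sum>m<c v. len v m)" using Sfull st by auto
      thus "g v = 0" by (simp add: g_def)
    qed
  qed
  have gJ: "\<And>v. v \<in> J \<Longrightarrow> g v \<le> real (w j) * lmax j"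
  proof -
    fix v assume v: "v \<in> J"
    hence vm: "v mod n = j" unfolding J_def by auto
    have "g v \<le> S v t" using Snn by (simp add: g_def)
    also have "\<dots> \<le> (\<Sum>m<c v. lmax j)"
      unfolding S_def using outl pk vm by (meson lessThan_iff order_trans sum_mono)
    also have "\<dots> = real (c v) * lmax j" by simp
    also have "\<dots> \<le> real (w j) * lmax j"
      using cw[of v] vm assms(3,6) by (intro mult_right_mono) auto
    finally show "g v \<le> real (w j) * lmax j" .
  qed
  have Jb: "?D j t - ?D j s \<le> real (card J) * (real (w j) * lmax j)"
    unfolding DJ using sum_mono[OF gJ, of J] by simp
  have gI: "\<And>u. u \<in> I \<Longrightarrow> real (w i) * lmin i \<le> g u"
  proof -
    fix u assume u: "u \<in> I"
    hence um: "u mod n = i" and sb: "s < b u" and et: "e u \<le> t" unfolding I_def by auto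
    have "c u = w i"
    proof (rule ccontr)
      assume "c u \<noteq> w i"
      hence "c u < w (u mod n)" using cw[of u] um by simp
      hence "A i (e u) \<le> ?D i (e u)" using full[of u] um by simp
      moreover have "?D i (e u) < A i (e u)" using bl sb be[of u] et by (meson less_le_trans)
      ultimately show False by simp
    qed
    have "S u s = 0" using S0 sb by simp
    hence "g u = (\<Sum>m<c u. len u m)" using Sfull et by (simp add: g_def)
    moreover have "(\<Sum>m<c u. lmin i) \<le> (\<Sum>m<c u. len u m)"
      using pk um by (intro sum_mono) auto
    ultimately show "real (w i) * lmin i \<le> g u" using \<open>c u = w i\<close> by simp
  qed
  have Ib: "real (card I) * (real (w i) * lmin i) \<le> ?D i t - ?D i s"
  proof -
    have "real (card I) * (real (w i) * lmin i) \<le> (\<Sum>v\<in>I. g v)"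
      using sum_mono[OF gI, of I] by simp
    also have "\<dots> \<le> (\<Sum>v\<in>{v\<in>F. v mod n = i}. g v)"
      by (rule sum_mono2) (use finF gnn in \<open>auto simp: I_def\<close>)
    finally show ?thesis using Ddiff by simp
  qed
  have Dinn: "0 \<le> ?D i t - ?D i s" using Ddiff gnn by (simp add: sum_nonneg)
  have card: "J \<noteq> {} \<Longrightarrow> card J - 1 \<le> card I"
  proof -
    assume Jne: "J \<noteq> {}"
    define v' where "v' = Max J"
    have v'J: "v' \<in> J" unfolding v'_def using Jne finJ by simp
    define d where "d = (i + n - j) mod n"
    have dpos: "0 < d" and dlt: "d < n"
    proof -
      show "d < n" unfolding d_def using assms(1) by simp
      show "0 < d"
      proof (rule ccontr)
        assume "\<not> 0 < d"
        hence "n dvd (i + n - j)" unfolding d_def by auto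
        then obtain q where q: "i + n - j = n * q" by (auto elim: dvdE)
        have "q \<noteq> 0" proof assume "q = 0" thus False using q assms(6) by simp qed
        moreover have "\<not> 2 \<le> q"
        proof
          assume "2 \<le> q"
          hence "n * 2 \<le> n * q" by simp
          thus False using q assms(5) by linarith
        qed
        ultimately have "q = 1" by simp
        thus False using q assms(5,6,7) by simp
      qed
    qed
    have inj: "inj_on (\<lambda>v. v + d) (J - {v'})" by (simp add: inj_on_def)
    have img: "(\<lambda>v. v + d) ` (J - {v'}) \<subseteq> I"
    proof
      fix u assume "u \<in> (\<lambda>v. v + d) ` (J - {v'})"
      then obtain v where v: "v \<in> J" "v \<noteq> v'" and u: "u = v + d" by auto
      have vm: "v mod n = j" and se: "s < e v" using v unfolding J_def by auto
      have v'm: "v' mod n = j" and bv': "b v' < t" using v'J unfolding J_def F_def by auto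
      have "v \<le> v'" unfolding v'_def using finJ v by simp
      hence vv: "v < v'" using v by simp
      have "v + n \<le> v'"
      proof -
        have ve: "v = n * (v div n) + j" using vm div_mult_mod_eq[of v n] by (simp add: mult.commute)
        moreover have v'e: "v' = n * (v' div n) + j" using v'm div_mult_mod_eq[of v' n] by (simp add: mult.commute)
        ultimately have "v div n < v' div n" using vv
          by (metis add_less_cancel_right mult_less_cancel1 not_less_iff_gr_or_eq)
        hence "n * (v div n) + n \<le> n * (v' div n)"
          by (metis Suc_leI mult_Suc_right add.commute mult_le_mono2)
        thus ?thesis using ve v'e by linarith
      qed
      have um: "u mod n = i"
      proof -
        have "u mod n = (v + (i + n - j)) mod n" unfolding u d_def by (simp add: mod_add_right_eq)
        also have "\<dots> = (v mod n + (i + n - j)) mod n" by (simp add: mod_add_left_eq)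
        also have "\<dots> = (i + n) mod n" using vm assms(6) by simp
        also have "\<dots> = i" using assms(5) by simp
        finally show ?thesis .
      qed
      have "e v \<le> b u" using eb2 u dpos by simp
      hence sb: "s < b u" using se by simp
      have "u < v'" using u dlt \<open>v + n \<le> v'\<close> by simp
      hence "e u \<le> b v'" by (rule eb2)
      hence "e u < t" using bv' by simp
      moreover have "b u < t" using be[of u] \<open>e u < t\<close> by simp
      ultimately show "u \<in> I" unfolding I_def F_def using um sb by simp
    qed
    have "card (J - {v'}) \<le> card I" using card_inj_on_le[OF inj img finI] .
    thus ?thesis using v'J finJ by simp
  qed
  show ?thesis
  proof (cases "?D j t - ?D j s - real (w j) * lmax j \<le> 0")
    case True
    thus ?thesis using Dinn qi by simp
  next
    case False
    hence Jne: "J \<noteq> {}" using Jb qj by auto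
    hence cJ: "card J \<ge> 1" using finJ by (simp add: Suc_le_eq card_gt_0_iff)
    have "real (card J) - 1 \<le> real (card I)" using card[OF Jne] cJ by linarith
    have "max (?D j t - ?D j s - real (w j) * lmax j) 0 / (real (w j) * lmax j)
        = (?D j t - ?D j s) / (real (w j) * lmax j) - 1" using False aux_div[OF less_imp_neq[OF qj, symmetric]] by simp
    also have "\<dots> \<le> real (card J) - 1" using Jb qj by (simp add: divide_le_eq)
    also have "\<dots> \<le> real (card I)" by fact
    also have "\<dots> \<le> (?D i t - ?D i s) / (real (w i) * lmin i)" using Ib qi by (simp add: le_divide_eq)
    finally show ?thesis .
  qed
qed

end
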